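(* Let $S=K[x_1,\dots,x_n]$ with $K$ an $F$-finite field of prime characteristic $p$, $I\subseteq S$ a squarefree monomial ideal, and $R=S/I$. If $\mathfrak q$ is a monomial prime ideal of $R$, then $\mathfrak q_e=\mathfrak q^{[p^e]}+\mathcal P(\mathfrak q)$ for every $e\in\mathbb N$.
   Context: A monomial ideal of $R$ is one generated by images of monomials. $\mathfrak q^{[p^e]}$ is the ideal generated by $p^e$-th powers of elements of $\mathfrak q$. $J_e=\{f\in R\mid \varphi(f^{1/p^e})\in J \text{ for all }\varphi\in\operatorname{Hom}_R(R^{1/p^e},R)\}$ and $\mathcal P(J)=\bigcap_{s\in\mathbb N}J_s$ (Cartier core). *)

theory Defs
  imports "HOL-Algebra.QuotRing" "HOL-Computational_Algebra.Primes" "HOL-Library.Poly_Mapping"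
begin

text \<open>Polynomial ring S = K[x_v | v in 'v] (with 'v a finite type of variables),
  elements are finitely supported maps from monomials (exponent vectors) to K.\<close>

type_synonym ('v, 'k) mpoly = "('v \<Rightarrow>\<^sub>0 nat) \<Rightarrow>\<^sub>0 'k"

definition poly_ring :: "('v, 'k::comm_ring_1) mpoly ring" where
  "poly_ring = \<lparr>carrier = UNIV, monoid.mult = (*), one = 1, zero = 0, add = (+)\<rparr>"

definition monom_of :: "('v \<Rightarrow>\<^sub>0 nat) \<Rightarrow> ('v, 'k::comm_ring_1) mpoly" where
  "monom_of m = Poly_Mapping.single m 1"

definition squarefree_monomial_ideal :: "('v, 'k::comm_ring_1) mpoly set \<Rightarrow> bool" where
  "squarefree_monomial_ideal I \<longleftrightarrow>
     (\<exists>G. (\<forall>m\<in>G. \<forall>v. Poly_Mapping.lookup m v \<le> 1) \<and> I = genideal poly_ring (monom_of ` G))"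

definition quot_ring :: "('v, 'k::comm_ring_1) mpoly set \<Rightarrow> ('v, 'k) mpoly set ring" where
  "quot_ring I = poly_ring Quot I"

definition proj :: "('v, 'k::comm_ring_1) mpoly set \<Rightarrow> ('v, 'k) mpoly \<Rightarrow> ('v, 'k) mpoly set" where
  "proj I f = I +>\<^bsub>poly_ring\<^esub> f"

definition monomial_ideal_quot ::
  "('v, 'k::comm_ring_1) mpoly set \<Rightarrow> ('v, 'k) mpoly set set \<Rightarrow> bool" where
  "monomial_ideal_quot I q \<longleftrightarrow>
     (\<exists>G. q = genideal (quot_ring I) ((\<lambda>m. proj I (monom_of m)) ` G))"

definition frob_power :: "('a, 'b) ring_scheme \<Rightarrow> nat \<Rightarrow> 'a set \<Rightarrow> nat \<Rightarrow> 'a set" where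
  "frob_power R p q e = genideal R ((\<lambda>x. x [^]\<^bsub>R\<^esub> (p ^ e)) ` q)"

text \<open>Hom_R(R^{1/p^e}, R), identifying R^{1/p^e} with R viewed as an R-module through
  the e-th Frobenius (f^{1/p^e} corresponds to f): additive maps phi with
  phi(r^{p^e} s) = r phi(s).\<close>
definition cartier_maps :: "('a, 'b) ring_scheme \<Rightarrow> nat \<Rightarrow> nat \<Rightarrow> ('a \<Rightarrow> 'a) set" where
  "cartier_maps R p e = {\<phi>. \<phi> \<in> carrier R \<rightarrow> carrier R \<and>
      (\<forall>x\<in>carrier R. \<forall>y\<in>carrier R. \<phi> (x \<oplus>\<^bsub>R\<^esub> y) = \<phi> x \<oplus>\<^bsub>R\<^esub> \<phi> y) \<and>
      (\<forall>r\<in>carrier R. \<forall>s\<in>carrier R.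
          \<phi> ((r [^]\<^bsub>R\<^esub> (p ^ e)) \<otimes>\<^bsub>R\<^esub> s) = r \<otimes>\<^bsub>R\<^esub> \<phi> s)}"

definition J_e :: "('a, 'b) ring_scheme \<Rightarrow> nat \<Rightarrow> 'a set \<Rightarrow> nat \<Rightarrow> 'a set" where
  "J_e R p J e = {f \<in> carrier R. \<forall>\<phi>\<in>cartier_maps R p e. \<phi> f \<in> J}"

definition cartier_core :: "('a, 'b) ring_scheme \<Rightarrow> nat \<Rightarrow> 'a set \<Rightarrow> 'a set" where
  "cartier_core R p J = (\<Inter>s. J_e R p J s)"

text \<open>F-finite field of characteristic p: K is a finitely generated K^p-module.\<close>
definition F_finite_field :: "'k::field itself \<Rightarrow> nat \<Rightarrow> bool" where
  "F_finite_field _ p \<longleftrightarrow>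
     (\<exists>B::'k set. finite B \<and> (\<forall>x::'k. \<exists>c. x = (\<Sum>b\<in>B. c b ^ p * b)))"

end

theory Submission
  imports Defs
begin


lemma poly_ring_simps[simp]:
  "carrier poly_ring = UNIV" "monoid.mult poly_ring = (*)" "one poly_ring = 1"
  "zero poly_ring = 0" "add poly_ring = (+)"
  by (simp_all add: poly_ring_def)

lemma cring_poly_ring: "cring (poly_ring :: ('v,'k::comm_ring_1) mpoly ring)"
proof (rule cringI)
  show "abelian_group (poly_ring :: ('v,'k) mpoly ring)"
    by (rule abelian_groupI) (auto simp: algebra_simps intro: exI[of _ "- x" for x])
  show "comm_monoid (poly_ring :: ('v,'k) mpoly ring)"
    by (rule comm_monoidI) (auto simp: algebra_simps)
qed (auto simp: algebra_simps)

interpretation PR: cring "poly_ring :: ('v,'k::comm_ring_1) mpoly ring"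
  by (rule cring_poly_ring)

lemma poly_ring_a_inv[simp]: "a_inv (poly_ring :: ('v,'k::comm_ring_1) mpoly ring) x = - x"
  by (metis PR.add.inv_equality PR.add.m_comm UNIV_I add.right_inverse poly_ring_simps)

lemma poly_ring_pow[simp]: "x [^]\<^bsub>(poly_ring :: ('v,'k::comm_ring_1) mpoly ring)\<^esub> (n::nat) = x ^ n"
  by (induct n) (auto simp: mult.commute)


context cring begin

lemma cm_zero: assumes "\<phi> \<in> cartier_maps R p e" shows "\<phi> \<zero> = \<zero>"
proof -
  have c: "\<phi> \<zero> \<in> carrier R" using assms unfolding cartier_maps_def by auto
  have "\<phi> (\<zero> \<oplus> \<zero>) = \<phi> \<zero> \<oplus> \<phi> \<zero>" using assms unfolding cartier_maps_def by blast
  hence "\<phi> \<zero> \<oplus> \<phi> \<zero> = \<phi> \<zero>" by simp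
  thus ?thesis using add.l_cancel_one[OF c c] by simp
qed

lemma cm_carrier: "\<phi> \<in> cartier_maps R p e \<Longrightarrow> x \<in> carrier R \<Longrightarrow> \<phi> x \<in> carrier R"
  unfolding cartier_maps_def by auto

lemma cm_add: "\<phi> \<in> cartier_maps R p e \<Longrightarrow> x \<in> carrier R \<Longrightarrow> y \<in> carrier R \<Longrightarrow> \<phi> (x \<oplus> y) = \<phi> x \<oplus> \<phi> y"
  unfolding cartier_maps_def by auto

lemma cm_lin: "\<phi> \<in> cartier_maps R p e \<Longrightarrow> r \<in> carrier R \<Longrightarrow> s \<in> carrier R \<Longrightarrow>
   \<phi> ((r [^] (p ^ e)) \<otimes> s) = r \<otimes> \<phi> s"
  unfolding cartier_maps_def by auto

lemma cm_neg: assumes "\<phi> \<in> cartier_maps R p e" "x \<in> carrier R" shows "\<phi> (\<ominus> x) = \<ominus> \<phi> x"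
proof -
  have "\<phi> (\<ominus> x) \<oplus> \<phi> x = \<zero>" using cm_add[OF assms(1), of "\<ominus> x" x] assms cm_zero[OF assms(1)]
    by (simp add: l_neg)
  thus ?thesis using assms cm_carrier[OF assms(1)] minus_equality[of "\<phi> (\<ominus> x)" "\<phi> x"] by simp
qed

lemma cm_mult: assumes "\<phi> \<in> cartier_maps R p e" "a \<in> carrier R"
  shows "(\<lambda>s. \<phi> (a \<otimes> s)) \<in> cartier_maps R p e"
  unfolding cartier_maps_def
proof (intro CollectI conjI ballI)
  show "(\<lambda>s. \<phi> (a \<otimes> s)) \<in> carrier R \<rightarrow> carrier R" using assms cm_carrier by auto
  fix x y assume "x \<in> carrier R" "y \<in> carrier R"
  thus "\<phi> (a \<otimes> (x \<oplus> y)) = \<phi> (a \<otimes> x) \<oplus> \<phi> (a \<otimes> y)"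
    using assms by (simp add: r_distr cm_add)
next
  fix r s assume rs: "r \<in> carrier R" "s \<in> carrier R"
  have eq1: "a \<otimes> (r [^] (p ^ e) \<otimes> s) = r [^] (p ^ e) \<otimes> (a \<otimes> s)"
    using rs assms(2) nat_pow_closed[OF rs(1)] by (intro m_lcomm) auto
  have eq2: "\<phi> (r [^] (p ^ e) \<otimes> (a \<otimes> s)) = r \<otimes> \<phi> (a \<otimes> s)"
    using rs assms(2) by (intro cm_lin[OF assms(1) rs(1)]) auto
  show "\<phi> (a \<otimes> (r [^] (p ^ e) \<otimes> s)) = r \<otimes> \<phi> (a \<otimes> s)" unfolding eq1 by (rule eq2)
qed

lemma J_e_ideal: assumes "ideal J R" shows "ideal (J_e R p J e) R"
proof -
  interpret J: ideal J R by fact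
  show ?thesis
  proof (rule idealI)
    show "ring R" by (rule ring_axioms)
    show "subgroup (J_e R p J e) (add_monoid R)"
    proof (rule add.subgroupI)
      show "J_e R p J e \<subseteq> carrier R" unfolding J_e_def by auto
      show "J_e R p J e \<noteq> {}" unfolding J_e_def by (auto simp: cm_zero intro!: exI[of _ \<zero>])
      fix a assume "a \<in> J_e R p J e"
      thus "\<ominus> a \<in> J_e R p J e" unfolding J_e_def by (auto simp: cm_neg)
    next
      fix a b assume "a \<in> J_e R p J e" "b \<in> J_e R p J e"
      thus "a \<oplus> b \<in> J_e R p J e" unfolding J_e_def by (auto simp: cm_add)
    qed
  next
    fix a x assume a: "a \<in> J_e R p J e" and x: "x \<in> carrier R"
    have ac: "a \<in> carrier R" using a unfolding J_e_def by auto
    show "x \<otimes> a \<in> J_e R p J e" unfolding J_e_def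
    proof (intro CollectI conjI ballI)
      show "x \<otimes> a \<in> carrier R" using ac x by simp
      fix \<phi> assume "\<phi> \<in> cartier_maps R p e"
      hence "(\<lambda>s. \<phi> (x \<otimes> s)) \<in> cartier_maps R p e" using cm_mult x by blast
      thus "\<phi> (x \<otimes> a) \<in> J" using a unfolding J_e_def by auto
    qed
    thus "a \<otimes> x \<in> J_e R p J e" using ac x by (simp add: m_comm)
  qed
qed

lemma frob_sub_J_e: assumes "ideal J R" shows "frob_power R p J e \<subseteq> J_e R p J e"
proof -
  interpret J: ideal J R by fact
  have "\<forall>x\<in>J. x [^] p ^ e \<in> J_e R p J e"
  proof
    fix x assume x: "x \<in> J"
    show "x [^] p ^ e \<in> J_e R p J e" unfolding J_e_def
    proof (intro CollectI conjI ballI)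
      show "x [^] p ^ e \<in> carrier R" using x by simp
      fix \<phi> assume phi: "\<phi> \<in> cartier_maps R p e"
      have "\<phi> (x [^] p ^ e) = \<phi> (x [^] p ^ e \<otimes> \<one>)" using x by simp
      also have "\<dots> = x \<otimes> \<phi> \<one>" using cm_lin[OF phi, of x \<one>] x by simp
      finally show "\<phi> (x [^] p ^ e) \<in> J" using x cm_carrier[OF phi] J.I_r_closed by simp
    qed
  qed
  hence "(\<lambda>x. x [^] p ^ e) ` J \<subseteq> J_e R p J e" by auto
  thus ?thesis unfolding frob_power_def by (rule genideal_minimal[OF J_e_ideal[OF assms]])
qed

lemma core_sub_J_e: "cartier_core R p J \<subseteq> J_e R p J e"
  unfolding cartier_core_def by auto

lemma core_ideal: assumes "ideal J R" shows "ideal (cartier_core R p J) R"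
  unfolding cartier_core_def
  using i_Intersect[of "range (J_e R p J)"] J_e_ideal[OF assms] by auto

lemma easy_dir: assumes "ideal J R"
  shows "set_add R (frob_power R p J e) (cartier_core R p J) \<subseteq> J_e R p J e"
proof
  interpret X: ideal "J_e R p J e" R using J_e_ideal[OF assms] .
  fix z assume "z \<in> set_add R (frob_power R p J e) (cartier_core R p J)"
  then obtain a b where "a \<in> frob_power R p J e" "b \<in> cartier_core R p J" "z = a \<oplus> b"
    unfolding set_add_def' by auto
  thus "z \<in> J_e R p J e" using frob_sub_J_e[OF assms] core_sub_J_e by blast
qed

end


definition mk :: "('v::finite \<Rightarrow> nat) \<Rightarrow> ('v \<Rightarrow>\<^sub>0 nat)" where
  "mk f = Abs_poly_mapping f"

lemma lookup_mk[simp]: "Poly_Mapping.lookup (mk f) = f"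
  unfolding mk_def by (rule Abs_poly_mapping_inverse) simp

lemma mk_lookup[simp]: "mk (Poly_Mapping.lookup a) = a"
  unfolding mk_def by (rule lookup_inverse)

lemma pm_eq_iff_lookup: "(a::'v \<Rightarrow>\<^sub>0 'b::zero) = b \<longleftrightarrow> (\<forall>v. Poly_Mapping.lookup a v = Poly_Mapping.lookup b v)"
  by (metis poly_mapping_eqI)

definition le_pm :: "('v \<Rightarrow>\<^sub>0 nat) \<Rightarrow> ('v \<Rightarrow>\<^sub>0 nat) \<Rightarrow> bool" where
  "le_pm a b \<longleftrightarrow> (\<forall>v. Poly_Mapping.lookup a v \<le> Poly_Mapping.lookup b v)"

lemma le_pm_add_right: "le_pm m b \<Longrightarrow> le_pm m (a + b)"
  by (auto simp: le_pm_def lookup_add intro: trans_le_add2)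

lemma le_pm_decomp: fixes a b :: "'v::finite \<Rightarrow>\<^sub>0 nat"
  assumes "le_pm a b" shows "b = a + mk (\<lambda>v. Poly_Mapping.lookup b v - Poly_Mapping.lookup a v)"
  using assms by (auto simp: le_pm_def pm_eq_iff_lookup lookup_add)

lemma le_pm_add_self: "le_pm a (a + b)"
  by (auto simp: le_pm_def lookup_add)

lemma pm_sum_single: fixes F :: "'a \<Rightarrow>\<^sub>0 'b::comm_monoid_add"
  assumes "finite K" "Poly_Mapping.keys F \<subseteq> K"
  shows "F = (\<Sum>a\<in>K. Poly_Mapping.single a (Poly_Mapping.lookup F a))"
proof (rule poly_mapping_eqI)
  fix b
  have "Poly_Mapping.lookup (\<Sum>a\<in>K. Poly_Mapping.single a (Poly_Mapping.lookup F a)) b = (\<Sum>a\<in>K. Poly_Mapping.lookup (Poly_Mapping.single a (Poly_Mapping.lookup F a)) b)"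
    by (simp add: lookup_sum)
  also have "\<dots> = (\<Sum>a\<in>K. if a = b then Poly_Mapping.lookup F a else 0)"
    by (intro sum.cong) (auto simp: lookup_single)
  also have "\<dots> = Poly_Mapping.lookup F b"
    using assms by (auto simp: sum.delta' in_keys_iff)
  finally show "Poly_Mapping.lookup F b = Poly_Mapping.lookup (\<Sum>a\<in>K. Poly_Mapping.single a (Poly_Mapping.lookup F a)) b" by simp
qed

lemma single_mult_lookup:
  fixes g :: "('v, 'k::comm_ring_1) mpoly"
  shows "Poly_Mapping.lookup (Poly_Mapping.single a c * g) (a + b) = c * Poly_Mapping.lookup g b"
proof -
  have "Poly_Mapping.single a c * g = Poly_Mapping.single a c * (\<Sum>k\<in>Poly_Mapping.keys g. Poly_Mapping.single k (Poly_Mapping.lookup g k))"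
    using pm_sum_single[of "Poly_Mapping.keys g" g] by simp
  also have "\<dots> = (\<Sum>k\<in>Poly_Mapping.keys g. Poly_Mapping.single (a + k) (c * Poly_Mapping.lookup g k))"
    by (simp add: sum_distrib_left mult_single)
  finally have "Poly_Mapping.lookup (Poly_Mapping.single a c * g) (a + b) = (\<Sum>k\<in>Poly_Mapping.keys g. if k = b then c * Poly_Mapping.lookup g k else 0)"
    by (simp add: lookup_sum lookup_single when_def)
  also have "\<dots> = c * Poly_Mapping.lookup g b"
    by (auto simp: sum.delta' in_keys_iff)
  finally show ?thesis .
qed

lemma single_mult_lookup0:
  fixes g :: "('v, 'k::comm_ring_1) mpoly"
  assumes "\<not> le_pm a b"
  shows "Poly_Mapping.lookup (Poly_Mapping.single a c * g) b = 0"
proof -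
  have "Poly_Mapping.single a c * g = Poly_Mapping.single a c * (\<Sum>k\<in>Poly_Mapping.keys g. Poly_Mapping.single k (Poly_Mapping.lookup g k))"
    using pm_sum_single[of "Poly_Mapping.keys g" g] by simp
  also have "\<dots> = (\<Sum>k\<in>Poly_Mapping.keys g. Poly_Mapping.single (a + k) (c * Poly_Mapping.lookup g k))"
    by (simp add: sum_distrib_left mult_single)
  finally have "Poly_Mapping.single a c * g = (\<Sum>k\<in>Poly_Mapping.keys g. Poly_Mapping.single (a + k) (c * Poly_Mapping.lookup g k))" .
  moreover have "\<And>k. a + k \<noteq> b" using assms le_pm_add_self by blast
  ultimately show ?thesis by (simp add: lookup_sum lookup_single when_def)
qed

lemma single_mult_lookup_gen:
  fixes g :: "('v::finite, 'k::comm_ring_1) mpoly"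
  shows "Poly_Mapping.lookup (Poly_Mapping.single a c * g) b =
     (if le_pm a b then c * Poly_Mapping.lookup g (mk (\<lambda>v. Poly_Mapping.lookup b v - Poly_Mapping.lookup a v)) else 0)"
  using single_mult_lookup[of a c g] single_mult_lookup0[of a b c g] le_pm_decomp[of a b] by metis

definition MI :: "('v \<Rightarrow>\<^sub>0 nat) set \<Rightarrow> ('v, 'k::comm_ring_1) mpoly set" where
  "MI M = {g. \<forall>b\<in>Poly_Mapping.keys g. \<exists>m\<in>M. le_pm m b}"

lemma MI_ideal: "ideal (MI M :: ('v, 'k::comm_ring_1) mpoly set) poly_ring"
proof (rule idealI)
  show "ring (poly_ring :: ('v, 'k) mpoly ring)" by (rule PR.ring_axioms)
  show "subgroup (MI M :: ('v, 'k) mpoly set) (add_monoid poly_ring)"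
  proof (rule PR.add.subgroupI)
    show "MI M \<subseteq> carrier poly_ring" by simp
    show "(MI M :: ('v, 'k) mpoly set) \<noteq> {}" by (auto simp: MI_def intro!: exI[of _ 0])
    fix a :: "('v, 'k) mpoly" assume "a \<in> MI M"
    thus "\<ominus>\<^bsub>poly_ring\<^esub> a \<in> MI M" by (simp add: MI_def)
  next
    fix a b :: "('v, 'k) mpoly" assume "a \<in> MI M" "b \<in> MI M"
    thus "a \<oplus>\<^bsub>poly_ring\<^esub> b \<in> MI M" using keys_add[of a b] by (auto simp: MI_def)
  qed
next
  fix a x :: "('v, 'k) mpoly" assume "a \<in> MI M"
  hence "\<forall>b\<in>Poly_Mapping.keys (x * a). \<exists>m\<in>M. le_pm m b" using keys_mult[of x a]
    by (auto simp: MI_def dest!: subsetD intro: le_pm_add_right)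
  thus "x \<otimes>\<^bsub>poly_ring\<^esub> a \<in> MI M" by (simp add: MI_def)
  thus "a \<otimes>\<^bsub>poly_ring\<^esub> x \<in> MI M" by (simp add: mult.commute)
qed

lemma keys_monom_of[simp]: "Poly_Mapping.keys (monom_of a :: ('v, 'k::{comm_ring_1}) mpoly) = (if (1::'k) = 0 then {} else {a})"
  by (simp add: monom_of_def)

lemma genideal_MI:
  "genideal poly_ring (monom_of ` M :: ('v::finite, 'k::field) mpoly set) = MI M"
proof
  show "genideal poly_ring (monom_of ` M) \<subseteq> (MI M :: ('v, 'k) mpoly set)"
    by (rule PR.genideal_minimal[OF MI_ideal]) (auto simp: MI_def le_pm_def)
  show "MI M \<subseteq> genideal poly_ring (monom_of ` M :: ('v, 'k) mpoly set)"
  proof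
    fix g :: "('v, 'k) mpoly" assume g: "g \<in> MI M"
    interpret J: ideal "genideal poly_ring (monom_of ` M :: ('v, 'k) mpoly set)" poly_ring
      by (rule PR.genideal_ideal) simp
    have "\<forall>b\<in>Poly_Mapping.keys g. Poly_Mapping.single b (Poly_Mapping.lookup g b) \<in> genideal poly_ring (monom_of ` M :: ('v, 'k) mpoly set)"
    proof
      fix b assume b: "b \<in> Poly_Mapping.keys g"
      then obtain m where m: "m \<in> M" "le_pm m b" using g by (auto simp: MI_def)
      have "Poly_Mapping.single b (Poly_Mapping.lookup g b) = Poly_Mapping.single (mk (\<lambda>v. Poly_Mapping.lookup b v - Poly_Mapping.lookup m v)) (Poly_Mapping.lookup g b) * monom_of m"
        using le_pm_decomp[OF m(2)] by (simp add: monom_of_def mult_single add.commute)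
      moreover have "monom_of m \<in> genideal poly_ring (monom_of ` M :: ('v, 'k) mpoly set)"
        using m(1) PR.genideal_self[of "monom_of ` M"] by auto
      ultimately show "Poly_Mapping.single b (Poly_Mapping.lookup g b) \<in> genideal poly_ring (monom_of ` M :: ('v, 'k) mpoly set)"
        using J.I_l_closed by simp
    qed
    hence "(\<Sum>b\<in>Poly_Mapping.keys g. Poly_Mapping.single b (Poly_Mapping.lookup g b)) \<in> genideal poly_ring (monom_of ` M :: ('v, 'k) mpoly set)"
    proof (induct rule: finite_induct[OF finite_keys, case_names empty insert])
      case empty thus ?case using J.zero_closed by simp
    next
      case (insert x F) thus ?case using J.a_closed by simp
    qed
    thus "g \<in> genideal poly_ring (monom_of ` M :: ('v, 'k) mpoly set)"
      using pm_sum_single[of "Poly_Mapping.keys g" g] by simp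
  qed
qed


lemma freshman:
  fixes x y :: "'a::comm_ring_1"
  assumes p: "prime p" and ch: "of_nat p = (0::'a)"
  shows "(x + y) ^ p = x ^ p + y ^ p"
proof -
  have p0: "p > 0" using p prime_gt_0_nat by blast
  have mid: "\<And>k. 0 < k \<Longrightarrow> k < p \<Longrightarrow> (of_nat (p choose k) :: 'a) = 0"
  proof -
    fix k assume k: "0 < k" "k < p"
    then obtain m where "p choose k = p * m" using dvd_choose_prime[of k p] p by (auto elim!: dvdE)
    thus "(of_nat (p choose k) :: 'a) = 0" using ch by simp
  qed
  have "(x + y) ^ p = (\<Sum>k\<le>p. of_nat (p choose k) * x ^ k * y ^ (p - k))"
    by (rule binomial_ring)
  also have "\<dots> = (\<Sum>k\<in>{0, p}. of_nat (p choose k) * x ^ k * y ^ (p - k))"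
    by (rule sum.mono_neutral_right) (use mid p0 in auto)
  also have "\<dots> = x ^ p + y ^ p" using p0 by simp
  finally show ?thesis .
qed

lemma freshman_pow:
  fixes x y :: "'a::comm_ring_1"
  assumes p: "prime p" and ch: "of_nat p = (0::'a)"
  shows "(x + y) ^ (p ^ e) = x ^ (p ^ e) + y ^ (p ^ e)"
proof (induct e)
  case 0 thus ?case by simp
next
  case (Suc e)
  have "(x + y) ^ (p ^ Suc e) = ((x + y) ^ (p ^ e)) ^ p" by (simp add: power_mult[symmetric] mult.commute)
  also have "\<dots> = (x ^ (p ^ e)) ^ p + (y ^ (p ^ e)) ^ p" using Suc freshman[OF assms] by simp
  also have "\<dots> = x ^ (p ^ Suc e) + y ^ (p ^ Suc e)" by (simp add: power_mult[symmetric] mult.commute)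
  finally show ?case .
qed

lemma freshman_sum:
  fixes f :: "'b \<Rightarrow> 'a::comm_ring_1"
  assumes p: "prime p" and ch: "of_nat p = (0::'a)" and "finite K"
  shows "(\<Sum>k\<in>K. f k) ^ (p ^ e) = (\<Sum>k\<in>K. f k ^ (p ^ e))"
proof -
  have "p ^ e > 0" using p prime_gt_0_nat by simp
  note pos = this
  from assms(3) show ?thesis by (induct rule: finite_induct) (use pos in \<open>auto simp: freshman_pow[OF p ch] zero_power\<close>)
qed

lemma minus_pow_p:
  fixes x :: "'a::field"
  assumes p: "prime p" and ch: "CHAR('a) = p"
  shows "(- x) ^ p = - (x ^ p)"
  using minus_power_prime_CHAR[of p x] assms by simp

locale ffin =
  fixes p :: nat and TY :: "'k::field itself"
  assumes p: "prime p" and ch: "CHAR('k) = p" and ff: "F_finite_field TYPE('k) p"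
begin

lemma chp: "of_nat p = (0::'k)" using ch by (metis of_nat_CHAR)

lemma p0: "p > 0" using p prime_gt_0_nat by blast

lemma fr_add: "((x::'k) + y) ^ p = x ^ p + y ^ p" by (rule freshman[OF p chp])

lemma fr_diff: "((x::'k) - y) ^ p = x ^ p - y ^ p"
  using fr_add[of x "-y"] minus_pow_p[OF p ch, of y] by simp

lemma fr_zero_iff: "(x::'k) ^ p = 0 \<longleftrightarrow> x = 0" using p0 by simp

definition spans :: "'k set \<Rightarrow> bool" where
  "spans C \<longleftrightarrow> (\<forall>x. \<exists>c. x = (\<Sum>b\<in>C. c b ^ p * b))"

lemma spans_exists: "\<exists>C. finite C \<and> 1 \<in> C \<and> spans C"
proof -
  obtain B :: "'k set" where B: "finite B" "\<forall>x. \<exists>c. x = (\<Sum>b\<in>B. c b ^ p * b)"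
    using ff unfolding F_finite_field_def by blast
  have "spans (insert 1 B)" unfolding spans_def
  proof
    fix x obtain c where c: "x = (\<Sum>b\<in>B. c b ^ p * b)" using B by blast
    show "\<exists>c. x = (\<Sum>b\<in>insert 1 B. c b ^ p * b)"
    proof (cases "1 \<in> B")
      case True thus ?thesis using c by (auto simp: insert_absorb)
    next
      case False
      have "(\<Sum>b\<in>insert 1 B. (c(1:=0)) b ^ p * b) = (c(1:=0)) 1 ^ p * 1 + (\<Sum>b\<in>B. (c(1:=0)) b ^ p * b)"
        using False B(1) by simp
      also have "\<dots> = (\<Sum>b\<in>B. c b ^ p * b)"
        using False p0 by (auto simp: zero_power intro!: sum.cong)
      finally have "(\<Sum>b\<in>insert 1 B. (c(1:=0)) b ^ p * b) = (\<Sum>b\<in>B. c b ^ p * b)" .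
      thus ?thesis using c by metis
    qed
  qed
  thus ?thesis using B(1) by blast
qed

definition C0 :: "'k set" where
  "C0 = (SOME C. finite C \<and> 1 \<in> C \<and> spans C \<and>
          (\<forall>C'. finite C' \<and> 1 \<in> C' \<and> spans C' \<longrightarrow> card C \<le> card C'))"

lemma C0: "finite C0" "1 \<in> C0" "spans C0"
  "\<And>C'. finite C' \<Longrightarrow> 1 \<in> C' \<Longrightarrow> spans C' \<Longrightarrow> card C0 \<le> card C'"
proof -
  obtain C where "finite C \<and> 1 \<in> C \<and> spans C" using spans_exists by blast
  from ex_has_least_nat[of "\<lambda>C. finite C \<and> 1 \<in> C \<and> spans C", OF this, of card]
  have "\<exists>C. finite C \<and> 1 \<in> C \<and> spans C \<and>
          (\<forall>C'. finite C' \<and> 1 \<in> C' \<and> spans C' \<longrightarrow> card C \<le> card C')" by blast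
  from someI_ex[OF this] show "finite C0" "1 \<in> C0" "spans C0"
    "\<And>C'. finite C' \<Longrightarrow> 1 \<in> C' \<Longrightarrow> spans C' \<Longrightarrow> card C0 \<le> card C'"
    unfolding C0_def by blast+
qed

lemma indep:
  assumes "(\<Sum>b\<in>C0. c b ^ p * b) = 0" "b0 \<in> C0"
  shows "c b0 = 0"
proof (rule ccontr)
  assume nz: "c b0 \<noteq> 0"
  show False
  proof (cases "\<exists>b1\<in>C0. b1 \<noteq> 1 \<and> c b1 \<noteq> 0")
    case True
    then obtain b1 where b1: "b1 \<in> C0" "b1 \<noteq> 1" "c b1 \<noteq> 0" by blast
    define C' where "C' = C0 - {b1}"
    have fin: "finite C'" "1 \<in> C'" using C0 b1 by (auto simp: C'_def)
    have split: "\<And>f. (\<Sum>b\<in>C0. f b) = f b1 + (\<Sum>b\<in>C'. f b)"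
      unfolding C'_def using C0(1) b1(1) by (simp add: sum.remove)
    have cb1: "c b1 ^ p \<noteq> 0" using b1 fr_zero_iff by blast
    have eq: "b1 = (\<Sum>b\<in>C'. (- c b / c b1) ^ p * b)"
    proof -
      have "c b1 ^ p * b1 = - (\<Sum>b\<in>C'. c b ^ p * b)" using assms(1) split[of "\<lambda>b. c b ^ p * b"]
        by (simp add: eq_neg_iff_add_eq_0)
      hence "b1 = - (\<Sum>b\<in>C'. c b ^ p * b) / c b1 ^ p" using cb1 by (simp add: field_simps)
      also have "\<dots> = (\<Sum>b\<in>C'. (- c b / c b1) ^ p * b)"
        by (simp add: sum_divide_distrib sum_negf power_divide minus_pow_p[OF p ch] field_simps)
      finally show ?thesis .
    qed
    have "spans C'" unfolding spans_def
    proof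
      fix x
      obtain d where d: "x = (\<Sum>b\<in>C0. d b ^ p * b)" using C0(3) unfolding spans_def by blast
      have "x = d b1 ^ p * b1 + (\<Sum>b\<in>C'. d b ^ p * b)" using d split by simp
      also have "\<dots> = (\<Sum>b\<in>C'. (d b1 * (- c b / c b1)) ^ p * b) + (\<Sum>b\<in>C'. d b ^ p * b)"
        using arg_cong[OF eq, of "\<lambda>z. d b1 ^ p * z"] by (simp only: sum_distrib_left power_mult_distrib mult.assoc)
      also have "\<dots> = (\<Sum>b\<in>C'. (d b1 * (- c b / c b1) + d b) ^ p * b)"
        by (simp only: fr_add sum.distrib distrib_right)
      finally show "\<exists>c. x = (\<Sum>b\<in>C'. c b ^ p * b)" by (rule exI[of _ "\<lambda>b. d b1 * (- c b / c b1) + d b"])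
    qed
    moreover have "card C' < card C0" unfolding C'_def using C0(1) b1(1) by (metis card_Diff1_less)
    ultimately show False using C0(4)[OF fin] by linarith
  next
    case False
    hence "(\<Sum>b\<in>C0. c b ^ p * b) = c 1 ^ p * 1"
      using C0(1,2) p0 by (subst sum.remove[of _ 1]) (auto intro!: sum.neutral)
    hence "c 1 = 0" using assms(1) fr_zero_iff by simp
    thus False using False nz assms(2) by (cases "b0 = 1") auto
  qed
qed

lemma uniq:
  assumes "(\<Sum>b\<in>C0. c b ^ p * b) = (\<Sum>b\<in>C0. d b ^ p * b)" "b0 \<in> C0"
  shows "c b0 = d b0"
proof -
  have "(\<Sum>b\<in>C0. (c b - d b) ^ p * b) = 0" using assms(1)
    by (simp add: fr_diff left_diff_distrib sum_subtractf)
  thus ?thesis using indep[of "\<lambda>b. c b - d b" b0] assms(2) by simp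
qed

definition rep :: "'k \<Rightarrow> 'k \<Rightarrow> 'k" where
  "rep x = (SOME c. x = (\<Sum>b\<in>C0. c b ^ p * b))"

lemma rep: "x = (\<Sum>b\<in>C0. rep x b ^ p * b)"
proof -
  have "\<exists>c. x = (\<Sum>b\<in>C0. c b ^ p * b)" using C0(3) unfolding spans_def by blast
  thus ?thesis unfolding rep_def by (rule someI_ex)
qed

definition psi1 :: "'k \<Rightarrow> 'k" where "psi1 x = rep x 1"

lemma psi1_add: "psi1 (x + y) = psi1 x + psi1 y"
proof -
  have "(\<Sum>b\<in>C0. rep (x + y) b ^ p * b) = (\<Sum>b\<in>C0. (rep x b + rep y b) ^ p * b)"
    using rep[of "x+y"] rep[of x] rep[of y] by (simp add: fr_add distrib_right sum.distrib)
  from uniq[of "rep (x+y)" "\<lambda>b. rep x b + rep y b", OF this C0(2)] show ?thesis unfolding psi1_def by simp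
qed

lemma psi1_lin: "psi1 (l ^ p * x) = l * psi1 x"
proof -
  have "l ^ p * x = l ^ p * (\<Sum>b\<in>C0. rep x b ^ p * b)" using rep[of x] by simp
  also have "\<dots> = (\<Sum>b\<in>C0. (l * rep x b) ^ p * b)"
    by (simp add: power_mult_distrib sum_distrib_left mult.assoc)
  finally have "(\<Sum>b\<in>C0. rep (l ^ p * x) b ^ p * b) = (\<Sum>b\<in>C0. (l * rep x b) ^ p * b)"
    using rep[of "l ^ p * x"] by simp
  from uniq[of "rep (l ^ p * x)" "\<lambda>b. l * rep x b", OF this C0(2)] show ?thesis unfolding psi1_def by simp
qed

lemma psi1_one: "psi1 1 = 1"
proof -
  have h: "\<And>b. (if b = 1 then (1::'k) else 0) ^ p * b = (if b = 1 then 1 else 0)" using p0 by (auto simp: zero_power)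
  have "(\<Sum>b\<in>C0. rep 1 b ^ p * b) = (\<Sum>b\<in>C0. (if b = 1 then 1 else 0) ^ p * b)"
    unfolding h using rep[of 1] C0(1,2) by simp
  from uniq[of "rep 1" "\<lambda>b. if b = 1 then 1 else 0", OF this C0(2)] show ?thesis unfolding psi1_def by simp
qed

definition psie :: "nat \<Rightarrow> 'k \<Rightarrow> 'k" where "psie e = psi1 ^^ e"

lemma psie_add: "psie e (x + y) = psie e x + psie e y"
  unfolding psie_def by (induct e arbitrary: x y) (auto simp: psi1_add)

lemma psie_one: "psie e 1 = 1"
  unfolding psie_def by (induct e) (auto simp: psi1_one)

lemma psie_lin: "psie e (l ^ (p ^ e) * x) = l * psie e x"
proof (induct e arbitrary: l x)
  case 0 thus ?case by (simp add: psie_def)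
next
  case (Suc e)
  have "psie (Suc e) (l ^ (p ^ Suc e) * x) = psie e (psi1 ((l ^ (p ^ e)) ^ p * x))"
    by (simp add: psie_def funpow_Suc_right power_mult[symmetric] mult.commute del: funpow.simps)
  also have "\<dots> = psie e (l ^ (p ^ e) * psi1 x)" by (simp add: psi1_lin)
  also have "\<dots> = l * psie (Suc e) x" using Suc by (simp add: psie_def funpow_Suc_right del: funpow.simps)
  finally show ?case .
qed

lemma psi_exists:
  assumes "(c0::'k) \<noteq> 0"
  shows "\<exists>\<psi>::'k\<Rightarrow>'k. (\<forall>x y. \<psi> (x + y) = \<psi> x + \<psi> y) \<and> (\<forall>l x. \<psi> (l ^ (p ^ e) * x) = l * \<psi> x) \<and> \<psi> c0 \<noteq> 0"
proof (intro exI[of _ "\<lambda>x. psie e (x / c0)"] conjI allI)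
  show "\<And>x y. psie e ((x + y) / c0) = psie e (x / c0) + psie e (y / c0)"
    by (simp add: add_divide_distrib psie_add)
  show "\<And>l x. psie e (l ^ p ^ e * x / c0) = l * psie e (x / c0)"
    using psie_lin by (metis times_divide_eq_right)
  show "psie e (c0 / c0) \<noteq> 0" using assms psie_one by simp
qed

end


lemma coord:
  fixes q U D B :: nat
  assumes q: "q > 0"
  shows "(U \<le> q*D + (q-1) \<and> q*B \<le> q*D + (q-1) - U) \<longleftrightarrow> (B \<le> D \<and> U \<le> q*(D-B) + (q-1))"
    and "B \<le> D \<Longrightarrow> U \<le> q*(D-B) + (q-1) \<Longrightarrow> q*D + (q-1) - U - q*B = q*(D-B) + (q-1) - U"
proof -
  show "(U \<le> q*D + (q-1) \<and> q*B \<le> q*D + (q-1) - U) \<longleftrightarrow> (B \<le> D \<and> U \<le> q*(D-B) + (q-1))"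
  proof (cases "B \<le> D")
    case True
    hence "q*(D-B) = q*D - q*B" "q*B \<le> q*D" by (simp_all add: diff_mult_distrib2)
    thus ?thesis using True by linarith
  next
    case False
    hence "q*B \<ge> q*(D+1)" by (intro mult_le_mono2) simp
    hence "q*B \<ge> q*D + q" by simp
    thus ?thesis using False q by linarith
  qed
  assume "B \<le> D" "U \<le> q*(D-B) + (q-1)"
  moreover hence "q*(D-B) = q*D - q*B" "q*B \<le> q*D" by (simp_all add: diff_mult_distrib2)
  ultimately show "q*D + (q-1) - U - q*B = q*(D-B) + (q-1) - U" by linarith
qed

lemma mk_zero[simp]: "mk (\<lambda>v. 0) = 0"
  by (simp add: pm_eq_iff_lookup)

definition smul_pm :: "nat \<Rightarrow> ('v::finite \<Rightarrow>\<^sub>0 nat) \<Rightarrow> ('v \<Rightarrow>\<^sub>0 nat)" where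
  "smul_pm n a = mk (\<lambda>v. n * Poly_Mapping.lookup a v)"

lemma single_power: "(Poly_Mapping.single (a::'v::finite \<Rightarrow>\<^sub>0 nat) (c::'k::comm_ring_1)) ^ n = Poly_Mapping.single (smul_pm n a) (c ^ n)"
proof (induct n)
  case 0 thus ?case by (simp add: smul_pm_def)
next
  case (Suc n)
  have "a + mk (\<lambda>v. n * Poly_Mapping.lookup a v) = mk (\<lambda>v. Suc n * Poly_Mapping.lookup a v)"
    by (simp add: pm_eq_iff_lookup lookup_add)
  thus ?case using Suc by (simp add: mult_single smul_pm_def)
qed

locale phimap =
  fixes p e :: nat and u :: "'v::finite \<Rightarrow>\<^sub>0 nat" and \<psi> :: "'k::field \<Rightarrow> 'k"
  assumes p: "prime p" and chp: "of_nat p = (0::'k)"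
    and psi_add: "\<And>x y. \<psi> (x + y) = \<psi> x + \<psi> y"
    and psi_lin: "\<And>l x. \<psi> (l ^ (p ^ e) * x) = l * \<psi> x"
begin

abbreviation "Qp \<equiv> p ^ e"

lemma Qp_pos: "Qp > 0" using p prime_gt_0_nat by simp

lemma psi0: "\<psi> 0 = 0"
proof -
  have "\<psi> 0 + \<psi> 0 = \<psi> 0 + 0" using psi_add[of 0 0] by simp
  thus ?thesis by (simp only: add_left_cancel)
qed

lemma psi_neg: "\<psi> (- x) = - \<psi> x" using psi_add[of x "-x"] psi0 by (simp add: add_eq_0_iff)

definition valid :: "('v \<Rightarrow>\<^sub>0 nat) \<Rightarrow> bool" where
  "valid d \<longleftrightarrow> (\<forall>v. Poly_Mapping.lookup u v \<le> Qp * Poly_Mapping.lookup d v + (Qp - 1))"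

definition Tm :: "('v \<Rightarrow>\<^sub>0 nat) \<Rightarrow> ('v \<Rightarrow>\<^sub>0 nat)" where
  "Tm d = mk (\<lambda>v. Qp * Poly_Mapping.lookup d v + (Qp - 1) - Poly_Mapping.lookup u v)"

lemma Tm_inj: "inj_on Tm {d. valid d}"
proof (rule inj_onI)
  fix d d' assume "d \<in> {d. valid d}" "d' \<in> {d. valid d}" "Tm d = Tm d'"
  hence "\<forall>v. Poly_Mapping.lookup d v = Poly_Mapping.lookup d' v"
  proof (intro allI)
    fix v
    have "Qp * Poly_Mapping.lookup d v + (Qp - 1) - Poly_Mapping.lookup u v = Qp * Poly_Mapping.lookup d' v + (Qp - 1) - Poly_Mapping.lookup u v"
    proof -
      have "Poly_Mapping.lookup (Tm d) v = Poly_Mapping.lookup (Tm d') v" using \<open>Tm d = Tm d'\<close> by simp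
      thus ?thesis unfolding Tm_def lookup_mk .
    qed
    moreover have "Poly_Mapping.lookup u v \<le> Qp * Poly_Mapping.lookup d v + (Qp - 1)"
      "Poly_Mapping.lookup u v \<le> Qp * Poly_Mapping.lookup d' v + (Qp - 1)"
      using \<open>d \<in> {d. valid d}\<close> \<open>d' \<in> {d. valid d}\<close> by (auto simp: valid_def)
    ultimately have "Qp * Poly_Mapping.lookup d v = Qp * Poly_Mapping.lookup d' v" by linarith
    thus "Poly_Mapping.lookup d v = Poly_Mapping.lookup d' v" using Qp_pos by (metis mult_left_cancel neq0_conv)
  qed
  thus "d = d'" by (simp add: pm_eq_iff_lookup)
qed

definition phiS :: "('v, 'k) mpoly \<Rightarrow> ('v, 'k) mpoly" where
  "phiS g = Abs_poly_mapping (\<lambda>d. if valid d then \<psi> (Poly_Mapping.lookup g (Tm d)) else 0)"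

lemma lookup_phiS: "Poly_Mapping.lookup (phiS g) d = (if valid d then \<psi> (Poly_Mapping.lookup g (Tm d)) else 0)"
proof -
  have "{d. (if valid d then \<psi> (Poly_Mapping.lookup g (Tm d)) else 0) \<noteq> 0} \<subseteq> Tm -` Poly_Mapping.keys g \<inter> {d. valid d}"
    using psi0 by (auto simp: in_keys_iff split: if_splits)
  moreover have "finite (Tm -` Poly_Mapping.keys g \<inter> {d. valid d})"
    by (rule finite_vimage_IntI[OF finite_keys[of g] Tm_inj])
  ultimately have "finite {d. (if valid d then \<psi> (Poly_Mapping.lookup g (Tm d)) else 0) \<noteq> 0}"
    by (rule finite_subset)
  thus ?thesis unfolding phiS_def by simp
qed

lemma phiS_add: "phiS (g + h) = phiS g + phiS h"
  by (simp add: pm_eq_iff_lookup lookup_phiS lookup_add psi_add psi0)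

lemma phiS_neg: "phiS (- g) = - phiS g"
  by (simp add: pm_eq_iff_lookup lookup_phiS psi_neg)

lemma phiS_diff: "phiS (g - h) = phiS g - phiS h"
  using phiS_add[of g "-h"] phiS_neg[of h] by simp

lemma phiS_zero: "phiS 0 = 0"
  by (simp add: pm_eq_iff_lookup lookup_phiS psi0)

lemma phiS_sum: "finite K \<Longrightarrow> phiS (\<Sum>k\<in>K. f k) = (\<Sum>k\<in>K. phiS (f k))"
  by (induct rule: finite_induct) (auto simp: phiS_zero phiS_add)

lemma phiS_monom: "phiS (Poly_Mapping.single (smul_pm Qp b) (c ^ Qp) * g) = Poly_Mapping.single b c * phiS g"
proof (rule poly_mapping_eqI)
  fix d
  let ?db = "mk (\<lambda>v. Poly_Mapping.lookup d v - Poly_Mapping.lookup b v)"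
  have pt: "\<And>v. (Poly_Mapping.lookup u v \<le> Qp * Poly_Mapping.lookup d v + (Qp - 1) \<and>
                Qp * Poly_Mapping.lookup b v \<le> Qp * Poly_Mapping.lookup d v + (Qp - 1) - Poly_Mapping.lookup u v) \<longleftrightarrow>
               (Poly_Mapping.lookup b v \<le> Poly_Mapping.lookup d v \<and>
                Poly_Mapping.lookup u v \<le> Qp * (Poly_Mapping.lookup d v - Poly_Mapping.lookup b v) + (Qp - 1))"
    by (rule coord(1)[OF Qp_pos])
  have eqv: "(valid d \<and> le_pm (smul_pm Qp b) (Tm d)) \<longleftrightarrow> (le_pm b d \<and> valid ?db)"
    unfolding valid_def le_pm_def Tm_def smul_pm_def lookup_mk by (simp only: all_conj_distrib[symmetric] pt)
  have eqT: "le_pm b d \<Longrightarrow> valid ?db \<Longrightarrow>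
     mk (\<lambda>v. Poly_Mapping.lookup (Tm d) v - Poly_Mapping.lookup (smul_pm Qp b) v) = Tm ?db"
    unfolding valid_def le_pm_def Tm_def smul_pm_def lookup_mk
    by (intro arg_cong[where f=mk] ext coord(2)[OF Qp_pos]) auto
  show "Poly_Mapping.lookup (phiS (Poly_Mapping.single (smul_pm Qp b) (c ^ Qp) * g)) d =
        Poly_Mapping.lookup (Poly_Mapping.single b c * phiS g) d"
  proof (cases "le_pm b d \<and> valid ?db")
    case True
    hence v: "valid d" "le_pm (smul_pm Qp b) (Tm d)" using eqv by blast+
    have t: "mk (\<lambda>v. Poly_Mapping.lookup (Tm d) v - Poly_Mapping.lookup (smul_pm Qp b) v) = Tm ?db"
      using eqT True by blast
    show ?thesis unfolding lookup_phiS single_mult_lookup_gen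
      using True v by (simp only: t if_True psi_lin)
  next
    case False
    hence "\<not> (valid d \<and> le_pm (smul_pm Qp b) (Tm d))" using eqv by blast
    thus ?thesis unfolding lookup_phiS single_mult_lookup_gen
      using False psi0 by auto
  qed
qed

lemma chS: "of_nat p = (0::('v, 'k) mpoly)"
  by (simp add: of_nat_single chp)

lemma phiS_lin: "phiS (r ^ Qp * g) = r * phiS g"
proof -
  have "r ^ Qp = (\<Sum>a\<in>Poly_Mapping.keys r. Poly_Mapping.single a (Poly_Mapping.lookup r a)) ^ Qp"
    using pm_sum_single[of "Poly_Mapping.keys r" r] by simp
  also have "\<dots> = (\<Sum>a\<in>Poly_Mapping.keys r. Poly_Mapping.single a (Poly_Mapping.lookup r a) ^ Qp)"
    by (rule freshman_sum[OF p chS]) simp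
  finally have "r ^ Qp * g = (\<Sum>a\<in>Poly_Mapping.keys r. Poly_Mapping.single (smul_pm Qp a) (Poly_Mapping.lookup r a ^ Qp) * g)"
    by (simp add: single_power sum_distrib_right)
  hence "phiS (r ^ Qp * g) = (\<Sum>a\<in>Poly_Mapping.keys r. Poly_Mapping.single a (Poly_Mapping.lookup r a) * phiS g)"
    by (simp add: phiS_sum phiS_monom)
  also have "\<dots> = r * phiS g"
    using pm_sum_single[of "Poly_Mapping.keys r" r] by (simp add: sum_distrib_right[symmetric])
  finally show ?thesis .
qed

end


locale SR =
  fixes p :: nat and I :: "('v::finite, 'k::field) mpoly set" and q :: "('v, 'k) mpoly set set" and e :: nat
  assumes ff: "ffin TYPE('k) p"
    and sq: "squarefree_monomial_ideal I"
    and pr: "primeideal q (quot_ring I)"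
    and mq: "monomial_ideal_quot I q"
begin

definition MS :: "('v \<Rightarrow>\<^sub>0 nat) set" where
  "MS = (SOME G. (\<forall>m\<in>G. \<forall>v. Poly_Mapping.lookup m v \<le> 1) \<and> I = genideal poly_ring (monom_of ` G))"

lemma MS: "\<forall>m\<in>MS. \<forall>v. Poly_Mapping.lookup m v \<le> 1" "I = MI MS"
proof -
  have "\<exists>G. (\<forall>m\<in>G. \<forall>v. Poly_Mapping.lookup m v \<le> 1) \<and> I = genideal poly_ring (monom_of ` G)"
    using sq unfolding squarefree_monomial_ideal_def by blast
  hence h: "(\<forall>m\<in>MS. \<forall>v. Poly_Mapping.lookup m v \<le> 1) \<and> I = genideal poly_ring (monom_of ` MS)"
    unfolding MS_def by (rule someI_ex)
  thus "\<forall>m\<in>MS. \<forall>v. Poly_Mapping.lookup m v \<le> 1" by (rule conjunct1)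
  from h have "I = genideal poly_ring (monom_of ` MS)" by (rule conjunct2)
  thus "I = MI MS" by (simp only: genideal_MI)
qed

lemma I_ideal: "ideal I poly_ring"
  by (rule subst[where P="\<lambda>J. ideal J poly_ring", OF MS(2)[symmetric] MI_ideal])

interpretation Iid: ideal I poly_ring by (rule I_ideal)

abbreviation "R \<equiv> quot_ring I"

lemma R_def': "R = poly_ring Quot I" by (simp add: quot_ring_def)

lemma cringR: "cring R" unfolding R_def' by (rule Iid.quotient_is_cring[OF cring_poly_ring])

interpretation RR: cring R by (rule cringR)

abbreviation "pj \<equiv> proj I"

lemma pj_def': "pj g = I +>\<^bsub>poly_ring\<^esub> g" by (simp add: proj_def)

lemma pj_hom: "pj \<in> ring_hom poly_ring R"
  unfolding R_def' using Iid.rcos_ring_hom by (simp add: proj_def[abs_def])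

lemma pj_add: "pj (x + y) = pj x \<oplus>\<^bsub>R\<^esub> pj y"
  using ring_hom_add[OF pj_hom, of x y] by simp
lemma pj_mult: "pj (x * y) = pj x \<otimes>\<^bsub>R\<^esub> pj y"
  using ring_hom_mult[OF pj_hom, of x y] by simp
lemma pj_one: "pj 1 = \<one>\<^bsub>R\<^esub>"
  using ring_hom_one[OF pj_hom] by simp
lemma pj_zero: "pj 0 = \<zero>\<^bsub>R\<^esub>"
  using ring_hom_zero[OF pj_hom PR.ring_axioms RR.ring_axioms] by simp
lemma pj_carrier[simp]: "pj g \<in> carrier R"
  using ring_hom_closed[OF pj_hom, of g] by simp

lemma pj_pow: "pj (x ^ n) = pj x [^]\<^bsub>R\<^esub> n"
proof (induct n)
  case 0 thus ?case by (simp add: pj_one)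
next
  case (Suc n)
  have "pj (x ^ Suc n) = pj (x ^ n) \<otimes>\<^bsub>R\<^esub> pj x" by (simp only: power_Suc2 pj_mult)
  thus ?case using Suc by (simp add: RR.nat_pow_Suc)
qed

lemma carrier_R: "carrier R = range pj"
  unfolding R_def' by (auto simp: FactRing_def A_RCOSETS_def' proj_def)

lemma zero_R: "\<zero>\<^bsub>R\<^esub> = I" unfolding R_def' by (simp add: FactRing_def)

lemma pj_eq_zero: "pj g = \<zero>\<^bsub>R\<^esub> \<longleftrightarrow> g \<in> I"
  unfolding zero_R pj_def'
  using Iid.rcos_const_imp_mem PR.a_rcos_zero[OF I_ideal] by auto

lemma pj_eq: "pj g = pj h \<longleftrightarrow> g - h \<in> I"
  using PR.quotient_eq_iff_same_a_r_cos[OF I_ideal, of g h] by (simp add: pj_def' PR.minus_eq)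

interpretation qp: primeideal q R by (rule pr)

definition Q :: "('v, 'k) mpoly set" where "Q = \<Union> q"

lemma Q_iff: "g \<in> Q \<longleftrightarrow> pj g \<in> q"
  unfolding Q_def pj_def'
  using PR.canonical_proj_vimage_mem_iff[OF I_ideal, of q g] qp.Icarr R_def' by auto

lemma Q_ideal: "ideal Q poly_ring"
  unfolding Q_def using PR.quot_ideal_imp_ring_ideal[OF I_ideal] qp.is_ideal R_def' by simp

interpretation Qid: ideal Q poly_ring by (rule Q_ideal)

lemma I_sub_Q: "I \<subseteq> Q"
proof
  fix x assume "x \<in> I"
  hence "pj x = \<zero>\<^bsub>R\<^esub>" using pj_eq_zero by simp
  thus "x \<in> Q" using Q_iff qp.zero_closed by simp
qed

lemma one_notin_Q: "1 \<notin> Q"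
proof
  assume "1 \<in> Q"
  hence "\<one>\<^bsub>R\<^esub> \<in> q" using Q_iff pj_one by simp
  hence "q = carrier R" using qp.one_imp_carrier by blast
  thus False using qp.I_notcarr by simp
qed

lemma Q_prime: "g * h \<in> Q \<Longrightarrow> g \<in> Q \<or> h \<in> Q"
  using qp.I_prime[of "pj g" "pj h"] by (simp add: Q_iff pj_mult)

lemma Q_mult: "g \<in> Q \<Longrightarrow> h * g \<in> Q" using Qid.I_l_closed by simp
lemma Q_add: "g \<in> Q \<Longrightarrow> h \<in> Q \<Longrightarrow> g + h \<in> Q" using Qid.a_closed by simp

lemma Q_sum: "finite K \<Longrightarrow> (\<And>k. k \<in> K \<Longrightarrow> f k \<in> Q) \<Longrightarrow> (\<Sum>k\<in>K. f k) \<in> Q"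
  by (induct rule: finite_induct) (auto simp: Q_add Qid.zero_closed[simplified])

lemma Q_of_monoms: "(\<And>b. b \<in> Poly_Mapping.keys g \<Longrightarrow> Poly_Mapping.single b (Poly_Mapping.lookup g b) \<in> Q) \<Longrightarrow> g \<in> Q"
  using Q_sum[of "Poly_Mapping.keys g" "\<lambda>b. Poly_Mapping.single b (Poly_Mapping.lookup g b)"]
    pm_sum_single[of "Poly_Mapping.keys g" g] by simp

lemma single_monom: "Poly_Mapping.single b c = Poly_Mapping.single 0 c * monom_of b"
  by (simp add: monom_of_def mult_single)

end


context SR begin

interpretation Iid: ideal I poly_ring by (rule I_ideal)
interpretation RR: cring R by (rule cringR)
interpretation qp: primeideal q R by (rule pr)
interpretation Qid: ideal Q poly_ring by (rule Q_ideal)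

lemma I_mem: "g \<in> I \<longleftrightarrow> (\<forall>b\<in>Poly_Mapping.keys g. \<exists>m\<in>MS. le_pm m b)"
proof -
  from MS(2) have "g \<in> I \<longleftrightarrow> g \<in> MI MS" by (rule arg_cong[where f="\<lambda>S. g \<in> S"])
  thus ?thesis by (simp add: MI_def)
qed

lemma sqf_le: "m \<in> MS \<Longrightarrow> le_pm m a \<longleftrightarrow> Poly_Mapping.keys m \<subseteq> Poly_Mapping.keys a"
proof
  assume m: "m \<in> MS" and le: "le_pm m a"
  show "Poly_Mapping.keys m \<subseteq> Poly_Mapping.keys a"
  proof
    fix v assume "v \<in> Poly_Mapping.keys m"
    hence "Poly_Mapping.lookup m v > 0" by (simp add: in_keys_iff)
    moreover have "Poly_Mapping.lookup m v \<le> Poly_Mapping.lookup a v" using le by (simp add: le_pm_def)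
    ultimately show "v \<in> Poly_Mapping.keys a" by (simp add: in_keys_iff)
  qed
next
  assume m: "m \<in> MS" and sub: "Poly_Mapping.keys m \<subseteq> Poly_Mapping.keys a"
  show "le_pm m a" unfolding le_pm_def
  proof
    fix v
    show "Poly_Mapping.lookup m v \<le> Poly_Mapping.lookup a v"
    proof (cases "Poly_Mapping.lookup m v = 0")
      case False
      hence "v \<in> Poly_Mapping.keys m" by (simp add: in_keys_iff)
      hence "v \<in> Poly_Mapping.keys a" using sub by blast
      hence "Poly_Mapping.lookup a v \<ge> 1" by (simp add: in_keys_iff)
      moreover have "Poly_Mapping.lookup m v \<le> 1" using MS(1) m by blast
      ultimately show ?thesis by linarith
    qed simp
  qed
qed

definition face :: "'v set \<Rightarrow> bool" where
  "face T \<longleftrightarrow> \<not> (\<exists>m\<in>MS. Poly_Mapping.keys m \<subseteq> T)"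

lemma face_mono: "face T \<Longrightarrow> S \<subseteq> T \<Longrightarrow> face S"
  unfolding face_def by blast

lemma monom_I: "monom_of a \<in> I \<longleftrightarrow> \<not> face (Poly_Mapping.keys a)"
  unfolding I_mem face_def by (auto simp: sqf_le)

lemma I_face: "g \<in> I \<longleftrightarrow> (\<forall>b\<in>Poly_Mapping.keys g. \<not> face (Poly_Mapping.keys b))"
  unfolding I_mem face_def by (auto simp: sqf_le)

abbreviation X :: "'v \<Rightarrow> ('v, 'k) mpoly" where "X v \<equiv> monom_of (Poly_Mapping.single v 1)"

definition A :: "'v set" where "A = {v. X v \<in> Q}"

lemma monom_add: "monom_of (a + b) = (monom_of a * monom_of b :: ('v, 'k) mpoly)"
  by (simp add: monom_of_def mult_single)

lemma X_pow: "X v ^ n = monom_of (Poly_Mapping.single v n)"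
proof -
  have "X v ^ n = monom_of (smul_pm n (Poly_Mapping.single v 1))"
    unfolding monom_of_def single_power by simp
  moreover have "smul_pm n (Poly_Mapping.single v 1) = Poly_Mapping.single v n"
    by (simp add: smul_pm_def pm_eq_iff_lookup lookup_single when_def)
  ultimately show ?thesis by simp
qed

lemma monom_prod: "finite K \<Longrightarrow> (\<Prod>k\<in>K. monom_of (f k)) = (monom_of (\<Sum>k\<in>K. f k) :: ('v, 'k) mpoly)"
  by (induct rule: finite_induct) (auto simp: monom_of_def mult_single)

lemma monom_decomp: "monom_of a = (\<Prod>v\<in>UNIV. X v ^ Poly_Mapping.lookup a v)"
proof -
  have "a = (\<Sum>v\<in>UNIV. Poly_Mapping.single v (Poly_Mapping.lookup a v))"
    by (rule pm_sum_single) auto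
  hence "monom_of a = (\<Prod>v\<in>UNIV. monom_of (Poly_Mapping.single v (Poly_Mapping.lookup a v)) :: ('v, 'k) mpoly)"
    using monom_prod[of UNIV "\<lambda>v. Poly_Mapping.single v (Poly_Mapping.lookup a v)"] by simp
  thus ?thesis by (simp only: X_pow)
qed

lemma Q_pow: "x ^ n \<in> Q \<Longrightarrow> n > 0 \<and> x \<in> Q"
proof (induct n)
  case 0 thus ?case using one_notin_Q by simp
next
  case (Suc n) thus ?case using Q_prime[of x "x ^ n"] by auto
qed

lemma Q_prod: "finite K \<Longrightarrow> (\<Prod>k\<in>K. f k) \<in> Q \<Longrightarrow> \<exists>k\<in>K. f k \<in> Q"
proof (induct rule: finite_induct)
  case empty thus ?case using one_notin_Q by simp
next
  case (insert x F) thus ?case using Q_prime[of "f x" "\<Prod>k\<in>F. f k"] by auto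
qed

lemma mono_Q: "monom_of a \<in> Q \<longleftrightarrow> (\<exists>v\<in>Poly_Mapping.keys a. v \<in> A)"
proof
  assume "monom_of a \<in> Q"
  hence "\<exists>v\<in>UNIV. X v ^ Poly_Mapping.lookup a v \<in> Q"
    using Q_prod[of UNIV "\<lambda>v. X v ^ Poly_Mapping.lookup a v"] monom_decomp[of a] by simp
  then obtain v where "X v ^ Poly_Mapping.lookup a v \<in> Q" by blast
  from Q_pow[OF this] show "\<exists>v\<in>Poly_Mapping.keys a. v \<in> A" by (auto simp: A_def in_keys_iff)
next
  assume "\<exists>v\<in>Poly_Mapping.keys a. v \<in> A"
  then obtain v where v: "v \<in> Poly_Mapping.keys a" "X v \<in> Q" by (auto simp: A_def)
  have "le_pm (Poly_Mapping.single v 1) a" unfolding le_pm_def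
  proof
    fix w show "Poly_Mapping.lookup (Poly_Mapping.single v 1) w \<le> Poly_Mapping.lookup a w"
      using v(1) by (cases "w = v") (auto simp: lookup_single in_keys_iff)
  qed
  from le_pm_decomp[OF this] obtain r where "a = Poly_Mapping.single v 1 + r" by blast
  hence "monom_of a = monom_of r * X v" by (simp only: monom_add mult.commute)
  thus "monom_of a \<in> Q" using v(2) Q_mult by simp
qed

definition Gq :: "('v \<Rightarrow>\<^sub>0 nat) set" where
  "Gq = (SOME G. q = genideal R ((\<lambda>m. pj (monom_of m)) ` G))"

lemma Gq: "q = genideal R ((\<lambda>m. pj (monom_of m)) ` Gq)"
proof -
  have "\<exists>G. q = genideal R ((\<lambda>m. pj (monom_of m)) ` G)"
    using mq unfolding monomial_ideal_quot_def by blast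
  thus ?thesis unfolding Gq_def by (rule someI_ex)
qed

lemma Q_monomial: assumes "g \<in> Q" "b \<in> Poly_Mapping.keys g" shows "monom_of b \<in> Q"
proof -
  define W where "W = (MI (Gq \<union> MS) :: ('v, 'k) mpoly set)"
  have W: "ideal W poly_ring" unfolding W_def by (rule MI_ideal)
  have IW: "I \<subseteq> W" unfolding W_def MI_def by (auto simp: I_mem) blast
  have "(\<lambda>J. (+>\<^bsub>poly_ring\<^esub>) I ` J) W \<in> {J. ideal J (poly_ring Quot I)}"
    using bij_betwE[OF PR.quot_ideal_correspondence[OF I_ideal]] W IW by blast
  hence pW: "ideal (pj ` W) R" by (simp add: R_def' pj_def'[abs_def])
  have gens: "(\<lambda>m. pj (monom_of m)) ` Gq \<subseteq> pj ` W"
    unfolding W_def by (auto simp: MI_def le_pm_def intro!: imageI)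
  have "genideal R ((\<lambda>m. pj (monom_of m)) ` Gq) \<subseteq> pj ` W" by (rule RR.genideal_minimal[OF pW gens])
  hence "q \<subseteq> pj ` W" by (rule subst[where P="\<lambda>S. S \<subseteq> pj ` W", OF Gq[symmetric]])
  hence "pj g \<in> pj ` W" using assms(1) Q_iff by auto
  then obtain w where w: "w \<in> W" "pj g = pj w" by auto
  hence "g - w \<in> W" using pj_eq IW by auto
  interpret Wid: ideal W poly_ring by (rule W)
  from \<open>g - w \<in> W\<close> have "(g - w) \<oplus>\<^bsub>poly_ring\<^esub> w \<in> W" using w(1) by (intro Wid.a_closed)
  hence "g \<in> W" by simp
  then obtain m where m: "m \<in> Gq \<union> MS" "le_pm m b" using assms(2) unfolding W_def MI_def by blast
  have mQ: "monom_of m \<in> Q"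
  proof (cases "m \<in> Gq")
    case True
    have "(\<lambda>m. pj (monom_of m)) ` Gq \<subseteq> carrier R" by auto
    hence "(\<lambda>m. pj (monom_of m)) ` Gq \<subseteq> genideal R ((\<lambda>m. pj (monom_of m)) ` Gq)" by (rule RR.genideal_self)
    hence "(\<lambda>m. pj (monom_of m)) ` Gq \<subseteq> q" by (rule subst[where P="\<lambda>S. _ \<subseteq> S", OF Gq[symmetric]])
    hence "pj (monom_of m) \<in> q" using True by blast
    thus ?thesis using Q_iff by simp
  next
    case False
    hence "m \<in> MS" using m(1) by blast
    hence "monom_of m \<in> I" unfolding I_mem by (auto simp: le_pm_def)
    thus ?thesis using I_sub_Q by blast
  qed
  from le_pm_decomp[OF m(2)] obtain r where "b = m + r" by blast
  hence "monom_of b = (monom_of r * monom_of m :: ('v, 'k) mpoly)" using monom_add[of m r] by (simp add: mult.commute)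
  thus ?thesis using mQ Q_mult by simp
qed

lemma Q_monom_iff: "g \<in> Q \<longleftrightarrow> (\<forall>b\<in>Poly_Mapping.keys g. monom_of b \<in> Q)"
proof
  assume "g \<in> Q" thus "\<forall>b\<in>Poly_Mapping.keys g. monom_of b \<in> Q" using Q_monomial by blast
next
  assume h: "\<forall>b\<in>Poly_Mapping.keys g. monom_of b \<in> Q"
  show "g \<in> Q"
  proof (rule Q_of_monoms)
    fix b assume "b \<in> Poly_Mapping.keys g"
    hence "monom_of b \<in> Q" using h by blast
    thus "Poly_Mapping.single b (Poly_Mapping.lookup g b) \<in> Q"
      by (subst single_monom) (rule Q_mult)
  qed
qed

end


context SR begin

definition F0 :: "'v set" where "F0 = - A"

lemma face_disj: "T \<inter> A = {} \<Longrightarrow> face T"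
proof (rule ccontr)
  assume dj: "T \<inter> A = {}" and "\<not> face T"
  then obtain m where m: "m \<in> MS" "Poly_Mapping.keys m \<subseteq> T" unfolding face_def by blast
  have "monom_of m \<in> I" using monom_I m unfolding face_def by blast
  hence "monom_of m \<in> Q" using I_sub_Q by blast
  then obtain v where "v \<in> Poly_Mapping.keys m" "v \<in> A" using mono_Q by blast
  thus False using dj m(2) by blast
qed

lemma face_F0: "face F0" by (rule face_disj) (auto simp: F0_def)

definition maxface :: "'v set \<Rightarrow> bool" where
  "maxface T \<longleftrightarrow> face T \<and> (\<forall>w. w \<notin> T \<longrightarrow> \<not> face (insert w T))"

lemma ex_maxface: assumes "face T" shows "\<exists>S. maxface S \<and> T \<subseteq> S"
proof -
  let ?P = "\<lambda>S. face S \<and> T \<subseteq> S"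
  have "\<exists>S. ?P S \<and> (\<forall>S'. ?P S' \<longrightarrow> card S' \<le> card S)"
    by (rule ex_has_greatest_nat[of ?P T card "Suc (card (UNIV :: 'v set))"])
       (use assms in \<open>auto simp: le_imp_less_Suc card_mono\<close>)
  then obtain S where S: "?P S" "\<And>S'. ?P S' \<Longrightarrow> card S' \<le> card S" by blast
  have "maxface S" unfolding maxface_def
  proof (intro conjI allI impI)
    show "face S" using S by blast
    fix w assume w: "w \<notin> S"
    show "\<not> face (insert w S)"
    proof
      assume "face (insert w S)"
      hence "card (insert w S) \<le> card S" using S by blast
      thus False using w by simp
    qed
  qed
  thus ?thesis using S by blast
qed

definition Gs :: "'v set" where "Gs = \<Inter> {T. maxface T \<and> F0 \<subseteq> T}"

lemma F0_sub_Gs: "F0 \<subseteq> Gs" unfolding Gs_def by blast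

lemma Gs_face: "face Gs"
proof -
  obtain S where "maxface S" "F0 \<subseteq> S" using ex_maxface[OF face_F0] by blast
  hence "Gs \<subseteq> S" unfolding Gs_def by blast
  thus ?thesis using \<open>maxface S\<close> face_mono unfolding maxface_def by blast
qed

lemma key_nonface: assumes "\<not> face N" shows "\<not> face ((N - (A \<inter> Gs)) \<union> F0)"
proof
  assume "face ((N - (A \<inter> Gs)) \<union> F0)"
  then obtain S where S: "maxface S" "(N - (A \<inter> Gs)) \<union> F0 \<subseteq> S" using ex_maxface by blast
  hence "Gs \<subseteq> S" unfolding Gs_def by blast
  hence "N \<subseteq> S" using S(2) by blast
  thus False using S(1) assms face_mono unfolding maxface_def by blast
qed

lemma notG: assumes "\<not> B \<subseteq> Gs" shows "\<exists>S w. maxface S \<and> F0 \<subseteq> S \<and> w \<in> B \<and> w \<notin> S"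
  using assms unfolding Gs_def by blast

end


context SR begin

interpretation Iid: ideal I poly_ring by (rule I_ideal)
interpretation RR: cring R by (rule cringR)
interpretation qp: primeideal q R by (rule pr)
interpretation Qid: ideal Q poly_ring by (rule Q_ideal)

lemma keys_add_nat: "Poly_Mapping.keys (a + b :: 'v \<Rightarrow>\<^sub>0 nat) = Poly_Mapping.keys a \<union> Poly_Mapping.keys b"
  by (auto simp: in_keys_iff lookup_add)

lemma frob_ideal: "ideal (frob_power R p q e) R"
  unfolding frob_power_def by (rule RR.genideal_ideal) (use qp.Icarr in auto)

lemma K1: assumes "v \<in> A" "Poly_Mapping.lookup a v \<ge> p ^ e"
  shows "pj (Poly_Mapping.single a c) \<in> frob_power R p q e"
proof -
  interpret Fr: ideal "frob_power R p q e" R by (rule frob_ideal)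
  have "le_pm (Poly_Mapping.single v (p ^ e)) a" unfolding le_pm_def
  proof
    fix w show "Poly_Mapping.lookup (Poly_Mapping.single v (p ^ e)) w \<le> Poly_Mapping.lookup a w"
      using assms(2) by (cases "w = v") (auto simp: lookup_single)
  qed
  from le_pm_decomp[OF this] obtain r where r: "a = Poly_Mapping.single v (p ^ e) + r" by blast
  have "Poly_Mapping.single a c = Poly_Mapping.single r c * X v ^ (p ^ e)"
    unfolding X_pow r by (simp add: monom_of_def mult_single add.commute)
  hence eq: "pj (Poly_Mapping.single a c) = pj (Poly_Mapping.single r c) \<otimes>\<^bsub>R\<^esub> (pj (X v) [^]\<^bsub>R\<^esub> (p ^ e))"
    by (simp add: pj_mult pj_pow)
  have "pj (X v) \<in> q" using assms(1) Q_iff unfolding A_def by simp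
  hence "pj (X v) [^]\<^bsub>R\<^esub> (p ^ e) \<in> frob_power R p q e"
    unfolding frob_power_def using RR.genideal_self[of "(\<lambda>x. x [^]\<^bsub>R\<^esub> (p ^ e)) ` q"] qp.Icarr by blast
  thus ?thesis unfolding eq by (rule Fr.I_l_closed) simp
qed

lemma K2: assumes "\<not> Poly_Mapping.keys a \<subseteq> Gs"
  shows "pj (Poly_Mapping.single a c) \<in> cartier_core R p q"
  unfolding cartier_core_def J_e_def
proof (intro InterI, clarsimp)
  fix s \<phi> assume phi: "\<phi> \<in> cartier_maps R p s"
  obtain S w where S: "maxface S" "F0 \<subseteq> S" "w \<in> Poly_Mapping.keys a" "w \<notin> S" using notG[OF assms] by blast
  define t where "t = mk (\<lambda>v. if v \<in> S then 1 else 0)"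
  have kt: "Poly_Mapping.keys t = S" by (auto simp: t_def in_keys_iff split: if_splits)
  let ?y = "pj (Poly_Mapping.single a c)" and ?s0 = "pj (monom_of t)"
  have ps: "p ^ s > 0" using ff ffin.p0 by auto
  have "monom_of t ^ (p ^ s) * Poly_Mapping.single a c = Poly_Mapping.single (smul_pm (p ^ s) t + a) c"
    by (simp add: monom_of_def single_power mult_single)
  moreover have "Poly_Mapping.single (smul_pm (p ^ s) t + a) c \<in> I"
  proof -
    have "Poly_Mapping.keys (smul_pm (p ^ s) t + a) = S \<union> Poly_Mapping.keys a"
      using ps unfolding keys_add_nat by (auto simp: smul_pm_def t_def in_keys_iff split: if_splits)
    hence "insert w S \<subseteq> Poly_Mapping.keys (smul_pm (p ^ s) t + a)" using S(3) by blast
    moreover have "\<not> face (insert w S)" using S(1,4) unfolding maxface_def by blast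
    ultimately have "\<not> face (Poly_Mapping.keys (smul_pm (p ^ s) t + a))" using face_mono by blast
    thus ?thesis unfolding I_face by (auto simp: lookup_single split: if_splits)
  qed
  ultimately have e0: "?s0 [^]\<^bsub>R\<^esub> (p ^ s) \<otimes>\<^bsub>R\<^esub> ?y = \<zero>\<^bsub>R\<^esub>"
    by (metis pj_eq_zero pj_mult pj_pow)
  have e1: "\<phi> (?s0 [^]\<^bsub>R\<^esub> (p ^ s) \<otimes>\<^bsub>R\<^esub> ?y) = ?s0 \<otimes>\<^bsub>R\<^esub> \<phi> ?y"
    by (rule RR.cm_lin[OF phi]) simp_all
  hence "?s0 \<otimes>\<^bsub>R\<^esub> \<phi> ?y = \<phi> \<zero>\<^bsub>R\<^esub>" unfolding e0 by simp
  hence z: "?s0 \<otimes>\<^bsub>R\<^esub> \<phi> ?y = \<zero>\<^bsub>R\<^esub>" using RR.cm_zero[OF phi] by simp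
  have "\<phi> ?y \<in> carrier R" using RR.cm_carrier[OF phi] by simp
  then obtain h where h: "\<phi> ?y = pj h" using carrier_R by auto
  have "pj (monom_of t * h) = \<zero>\<^bsub>R\<^esub>" using z unfolding h pj_mult .
  hence tI: "monom_of t * h \<in> I" using pj_eq_zero by blast
  have "h \<in> Q"
  proof (rule Q_monom_iff[THEN iffD2], intro ballI)
    fix b assume b: "b \<in> Poly_Mapping.keys h"
    have "Poly_Mapping.lookup (monom_of t * h) (t + b) = Poly_Mapping.lookup h b"
      unfolding monom_of_def by (simp add: single_mult_lookup)
    hence "t + b \<in> Poly_Mapping.keys (monom_of t * h)" using b by (simp add: in_keys_iff)
    hence "\<not> face (Poly_Mapping.keys (t + b))" using tI unfolding I_face by blast
    hence "\<not> face (S \<union> Poly_Mapping.keys b)" unfolding keys_add_nat kt .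
    moreover have "face S" using S(1) unfolding maxface_def by blast
    ultimately have "\<not> Poly_Mapping.keys b \<subseteq> S" by (auto simp: sup.absorb1)
    then obtain v where "v \<in> Poly_Mapping.keys b" "v \<notin> S" by blast
    hence "v \<in> A" using S(2) unfolding F0_def by blast
    thus "monom_of b \<in> Q" using mono_Q \<open>v \<in> Poly_Mapping.keys b\<close> by blast
  qed
  thus "\<phi> ?y \<in> q" unfolding h using Q_iff by simp
qed

end


context SR begin

interpretation Iid: ideal I poly_ring by (rule I_ideal)
interpretation RR: cring R by (rule cringR)
interpretation qp: primeideal q R by (rule pr)
interpretation Qid: ideal Q poly_ring by (rule Q_ideal)

lemma construct:
  assumes a0: "a0 \<in> Poly_Mapping.keys F" "\<forall>v\<in>A. Poly_Mapping.lookup a0 v < p ^ e"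
    "Poly_Mapping.keys a0 \<subseteq> Gs"
  shows "\<exists>\<phi>\<in>cartier_maps R p e. \<phi> (pj F) \<notin> q"
proof -
  let ?Qp = "p ^ e"
  have Qp: "?Qp > 0" using ff ffin.p0 by auto
  have c0: "Poly_Mapping.lookup F a0 \<noteq> 0" using a0(1) by (simp add: in_keys_iff)
  obtain \<psi> where psi: "\<And>x y. \<psi> (x + y) = \<psi> x + \<psi> y" "\<And>l x. \<psi> (l ^ ?Qp * x) = l * \<psi> x"
    "\<psi> (Poly_Mapping.lookup F a0) \<noteq> 0"
    using ffin.psi_exists[OF ff c0, of e] by blast
  let ?a = "Poly_Mapping.lookup a0"
  define u where "u = mk (\<lambda>v. if v \<in> A then (if v \<in> Gs then ?Qp - 1 - ?a v else ?Qp - 1)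
                         else ?Qp * (?a v + 1) + ?Qp - 1 - ?a v)"
  interpret M: phimap p e u \<psi>
    by (unfold_locales) (use ff ffin.p ffin.chp psi in auto)
  have lu: "\<And>v. Poly_Mapping.lookup u v = (if v \<in> A then (if v \<in> Gs then ?Qp - 1 - ?a v else ?Qp - 1)
                         else ?Qp * (?a v + 1) + ?Qp - 1 - ?a v)" unfolding u_def by simp
  have desc: "\<And>g. g \<in> I \<Longrightarrow> M.phiS g \<in> I"
  proof -
    fix g assume g: "g \<in> I"
    show "M.phiS g \<in> I" unfolding I_face
    proof
      fix d assume d: "d \<in> Poly_Mapping.keys (M.phiS g)"
      hence vd: "M.valid d" and td: "M.Tm d \<in> Poly_Mapping.keys g"
        using M.psi0 by (auto simp: M.lookup_phiS in_keys_iff split: if_splits)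
      have nf: "\<not> face (Poly_Mapping.keys (M.Tm d))" using g td unfolding I_face by blast
      have "(Poly_Mapping.keys (M.Tm d) - (A \<inter> Gs)) \<union> F0 \<subseteq> Poly_Mapping.keys d"
      proof
        fix v assume v: "v \<in> (Poly_Mapping.keys (M.Tm d) - (A \<inter> Gs)) \<union> F0"
        show "v \<in> Poly_Mapping.keys d"
        proof (cases "v \<in> A")
          case False
          have "1 \<le> ?Qp" using Qp by linarith
          hence "?Qp * ?a v \<ge> ?a v" using mult_le_mono1[of 1 ?Qp "?a v"] by simp
          moreover have "Poly_Mapping.lookup u v = ?Qp * ?a v + ?Qp + ?Qp - 1 - ?a v"
            using False unfolding lu by (simp add: algebra_simps)
          ultimately have "Poly_Mapping.lookup u v \<ge> 2 * ?Qp - 1" using \<open>1 \<le> ?Qp\<close> by linarith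
          moreover have "Poly_Mapping.lookup u v \<le> ?Qp * Poly_Mapping.lookup d v + (?Qp - 1)"
            using vd unfolding M.valid_def by blast
          ultimately have "Poly_Mapping.lookup d v \<noteq> 0"
          proof (intro notI)
            assume h1: "2 * ?Qp - 1 \<le> Poly_Mapping.lookup u v" and h2: "Poly_Mapping.lookup u v \<le> ?Qp * Poly_Mapping.lookup d v + (?Qp - 1)"
              and h3: "Poly_Mapping.lookup d v = 0"
            from h2 h3 have "Poly_Mapping.lookup u v \<le> ?Qp - 1" by simp
            with h1 Qp show False by linarith
          qed
          thus ?thesis by (simp add: in_keys_iff)
        next
          case True
          hence v2: "v \<in> Poly_Mapping.keys (M.Tm d)" "v \<notin> Gs" using v unfolding F0_def by auto
          hence "Poly_Mapping.lookup u v = ?Qp - 1" using True unfolding lu by simp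
          moreover have "Poly_Mapping.lookup (M.Tm d) v \<noteq> 0" using v2 by (simp add: in_keys_iff)
          ultimately have "Poly_Mapping.lookup d v \<noteq> 0" unfolding M.Tm_def by auto
          thus ?thesis by (simp add: in_keys_iff)
        qed
      qed
      thus "\<not> face (Poly_Mapping.keys d)" using key_nonface[OF nf] face_mono by blast
    qed
  qed
  define phiR where "phiR = (\<lambda>X. pj (M.phiS (SOME g. X = pj g)))"
  have phiR_pj: "\<And>g. phiR (pj g) = pj (M.phiS g)"
  proof -
    fix g
    have "\<exists>g'. pj g = pj g'" by blast
    hence "pj g = pj (SOME g'. pj g = pj g')" by (rule someI_ex)
    hence "(SOME g'. pj g = pj g') - g \<in> I" using pj_eq by metis
    hence "M.phiS (SOME g'. pj g = pj g') - M.phiS g \<in> I" using desc M.phiS_diff by metis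
    thus "phiR (pj g) = pj (M.phiS g)" unfolding phiR_def using pj_eq by blast
  qed
  have phiR: "phiR \<in> cartier_maps R p e" unfolding cartier_maps_def
  proof (intro CollectI conjI ballI)
    show "phiR \<in> carrier R \<rightarrow> carrier R" unfolding phiR_def by auto
    fix x y assume "x \<in> carrier R" "y \<in> carrier R"
    then obtain x' y' where "x = pj x'" "y = pj y'" using carrier_R by auto
    thus "phiR (x \<oplus>\<^bsub>R\<^esub> y) = phiR x \<oplus>\<^bsub>R\<^esub> phiR y"
      by (simp add: pj_add[symmetric] phiR_pj M.phiS_add)
  next
    fix r s assume "r \<in> carrier R" "s \<in> carrier R"
    then obtain r' s' where "r = pj r'" "s = pj s'" using carrier_R by auto
    thus "phiR (r [^]\<^bsub>R\<^esub> ?Qp \<otimes>\<^bsub>R\<^esub> s) = r \<otimes>\<^bsub>R\<^esub> phiR s"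
      by (simp add: pj_pow[symmetric] pj_mult[symmetric] phiR_pj M.phiS_lin)
  qed
  define d0 where "d0 = mk (\<lambda>v. if v \<in> A then 0 else ?a v + 1)"
  have vd0: "M.valid d0" unfolding M.valid_def d0_def lu by auto
  have td0: "M.Tm d0 = a0"
  proof (rule poly_mapping_eqI)
    fix v
    show "Poly_Mapping.lookup (M.Tm d0) v = ?a v"
    proof (cases "v \<in> A")
      case True
      show ?thesis
      proof (cases "v \<in> Gs")
        case True
        thus ?thesis using \<open>v \<in> A\<close> a0(2) unfolding M.Tm_def d0_def lu by auto
      next
        case False
        hence "?a v = 0" using a0(3) by (auto simp: in_keys_iff)
        thus ?thesis using \<open>v \<in> A\<close> False unfolding M.Tm_def d0_def lu by auto
      qed
    next
      case False
      have "1 \<le> ?Qp" using Qp by linarith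
          hence ge: "?Qp * ?a v \<ge> ?a v" using mult_le_mono1[of 1 ?Qp "?a v"] by simp
      have "Poly_Mapping.lookup (M.Tm d0) v = ?Qp * (?a v + 1) + (?Qp - 1) - (?Qp * (?a v + 1) + ?Qp - 1 - ?a v)"
        using False unfolding M.Tm_def d0_def lu by simp
      also have "\<dots> = ?Qp * ?a v + ?Qp + (?Qp - 1) - (?Qp * ?a v + ?Qp + ?Qp - 1 - ?a v)"
        by (simp add: algebra_simps)
      also have "\<dots> = ?a v" using ge \<open>1 \<le> ?Qp\<close> by linarith
      finally show ?thesis .
    qed
  qed
  have "Poly_Mapping.lookup (M.phiS F) d0 = \<psi> (Poly_Mapping.lookup F a0)"
    unfolding M.lookup_phiS using vd0 td0 by simp
  hence "d0 \<in> Poly_Mapping.keys (M.phiS F)" using psi(3) by (simp add: in_keys_iff)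
  moreover have "monom_of d0 \<notin> Q" unfolding mono_Q d0_def by (auto simp: in_keys_iff)
  ultimately have "M.phiS F \<notin> Q" using Q_monomial by blast
  hence "phiR (pj F) \<notin> q" unfolding phiR_pj Q_iff .
  thus ?thesis using phiR by blast
qed

end


context SR begin

interpretation Iid: ideal I poly_ring by (rule I_ideal)
interpretation RR: cring R by (rule cringR)
interpretation qp: primeideal q R by (rule pr)

lemma hard: "J_e R p q e \<subseteq> frob_power R p q e <+>\<^bsub>R\<^esub> cartier_core R p q"
proof
  fix f assume f: "f \<in> J_e R p q e"
  hence "f \<in> carrier R" unfolding J_e_def by blast
  then obtain F where F: "f = pj F" using carrier_R by auto
  define SI where "SI = frob_power R p q e <+>\<^bsub>R\<^esub> cartier_core R p q"
  have SIid: "ideal SI R" unfolding SI_def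
    by (rule RR.add_ideals[OF frob_ideal RR.core_ideal[OF qp.is_ideal]])
  interpret SIi: ideal SI R by (rule SIid)
  interpret Fr: ideal "frob_power R p q e" R by (rule frob_ideal)
  interpret Co: ideal "cartier_core R p q" R by (rule RR.core_ideal[OF qp.is_ideal])
  have frS: "\<And>x. x \<in> frob_power R p q e \<Longrightarrow> x \<in> SI"
  proof -
    fix x assume x: "x \<in> frob_power R p q e"
    hence "x \<oplus>\<^bsub>R\<^esub> \<zero>\<^bsub>R\<^esub> \<in> SI" unfolding SI_def set_add_def' using Co.zero_closed by blast
    thus "x \<in> SI" using x Fr.Icarr by simp
  qed
  have coS: "\<And>x. x \<in> cartier_core R p q \<Longrightarrow> x \<in> SI"
  proof -
    fix x assume x: "x \<in> cartier_core R p q"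
    hence "\<zero>\<^bsub>R\<^esub> \<oplus>\<^bsub>R\<^esub> x \<in> SI" unfolding SI_def set_add_def' using Fr.zero_closed by blast
    thus "x \<in> SI" using x Co.Icarr by simp
  qed
  have each: "\<And>a. a \<in> Poly_Mapping.keys F \<Longrightarrow> pj (Poly_Mapping.single a (Poly_Mapping.lookup F a)) \<in> SI"
  proof -
    fix a assume a: "a \<in> Poly_Mapping.keys F"
    show "pj (Poly_Mapping.single a (Poly_Mapping.lookup F a)) \<in> SI"
    proof (cases "\<exists>v\<in>A. Poly_Mapping.lookup a v \<ge> p ^ e")
      case True
      then obtain v where "v \<in> A" "Poly_Mapping.lookup a v \<ge> p ^ e" by blast
      thus ?thesis using K1 frS by blast
    next
      case False
      show ?thesis
      proof (cases "Poly_Mapping.keys a \<subseteq> Gs")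
        case True
        have "\<forall>v\<in>A. Poly_Mapping.lookup a v < p ^ e" using False by auto
        then obtain \<phi> where "\<phi> \<in> cartier_maps R p e" "\<phi> (pj F) \<notin> q"
          using construct[OF a _ True] by blast
        moreover have "\<phi> f \<in> q" using f \<open>\<phi> \<in> cartier_maps R p e\<close> unfolding J_e_def by blast
        ultimately show ?thesis using F by simp
      next
        case False
        thus ?thesis using K2 coS by blast
      qed
    qed
  qed
  have "\<And>K. finite K \<Longrightarrow> K \<subseteq> Poly_Mapping.keys F \<Longrightarrow>
          pj (\<Sum>a\<in>K. Poly_Mapping.single a (Poly_Mapping.lookup F a)) \<in> SI"
  proof -
    fix K :: "('v \<Rightarrow>\<^sub>0 nat) set" assume "finite K" "K \<subseteq> Poly_Mapping.keys F"
    thus "pj (\<Sum>a\<in>K. Poly_Mapping.single a (Poly_Mapping.lookup F a)) \<in> SI"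
    proof (induct K rule: finite_induct)
      case empty thus ?case using pj_zero SIi.zero_closed by simp
    next
      case (insert x K)
      thus ?case using each SIi.a_closed by (simp add: pj_add)
    qed
  qed
  hence "pj (\<Sum>a\<in>Poly_Mapping.keys F. Poly_Mapping.single a (Poly_Mapping.lookup F a)) \<in> SI" by simp
  hence "pj F \<in> SI" using pm_sum_single[of "Poly_Mapping.keys F" F] by simp
  thus "f \<in> frob_power R p q e <+>\<^bsub>R\<^esub> cartier_core R p q" using F unfolding SI_def by simp
qed

lemma main: "J_e R p q e = frob_power R p q e <+>\<^bsub>R\<^esub> cartier_core R p q"
  using hard RR.easy_dir[OF qp.is_ideal] by blast

end

theorem mainTheorem11:
  fixes I :: "('v::finite, 'k::field) mpoly set"
    and q :: "('v, 'k) mpoly set set"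
    and p e :: nat
  assumes "prime p" and "CHAR('k) = p"
    and "F_finite_field TYPE('k) p"
    and "squarefree_monomial_ideal I"
    and "primeideal q (quot_ring I)"
    and "monomial_ideal_quot I q"
  shows "J_e (quot_ring I) p q e =
           frob_power (quot_ring I) p q e <+>\<^bsub>quot_ring I\<^esub> cartier_core (quot_ring I) p q"
proof -
  have ff: "ffin TYPE('k) p" using assms(1-3) by (intro ffin.intro)
  interpret S: SR p I q e using ff assms(4-6) by (intro SR.intro)
  show ?thesis by (rule S.main)
qed

end
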